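(* Let $G$ be a connected simple graph of order $n$ and let $M_{G_1}$ be a mixed graph whose underlying graph $G_1$ is a spanning subgraph of $G$. The following are equivalent: (a) $G$ (regarded as a mixed graph with no arcs) and $M_{G_1}$ are cospectral; (b) $\lambda_1(G)=\lambda_1(M_{G_1})$; (c) $G_1=G$, and $V(M_{G_1})$ has a partition $\bigcup_{j\in\mathbb{T}_6}V_j$ such that for each $j\in\mathbb{T}_6$ the induced mixed subgraph $M_{G_1}[V_j]$ contains only undirected edges, and every other edge of $M_{G_1}$ is an arc $\overrightarrow{uv}$ with $u\in V_j$ and $v\in V_{\bar\omega\cdot j}$ for some $j\in\mathbb{T}_6$; (d) $G$ and $M_{G_1}$ are switching equivalent.
   Context: A mixed graph $M_G$ is obtained from a finite simple graph $G$ by orienting the edges of some subset of $E(G)$ (arcs $\overrightarrow{uv}$; the others are undirected edges $\{u,v\}$). With $\omega=\frac{1+\mathbf{i}\sqrt3}{2}$, $N(M_G)$ has $(u,v)$-entry $\omega$ if $\overrightarrow{uv}$ is an arc, $\bar\omega$ if $\overrightarrow{vu}$ is an arc, $1$ for an undirected edge $\{u,v\}$, $0$ otherwise; eigenvalues of $M_G$ are those of $N(M_G)$, $\lambda_1$ denotes the largest one, and cospectral means same eigenvalue multiset. $\mathbb{T}_6=\{1,-1,\omega,\bar\omega,-\omega,-\bar\omega\}$. Given a partition $V(M_G)=\bigcup_{j\in\mathbb{T}_6}V_j$ into six possibly empty sets, an edge or arc $xy$ has type $(j,k)$ if $x\in V_j,y\in V_k$ (for arcs, directed from $x$ to $y$).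 The partition is admissible if every undirected edge has type $(j,j)$ or $(j,\omega j)$ for some $j$, and every arc has type $(j,j)$, $(j,\bar\omega j)$ or $(j,-\omega j)$ for some $j$. A three-way switching with respect to an admissible partition replaces each undirected edge of type $(j,\omega j)$ by an arc from its end in $V_j$ to its end in $V_{\omega j}$, replaces each arc of type $(j,\bar\omega j)$ by an undirected edge, and reverses each arc of type $(j,-\omega j)$. The converse of a mixed graph reverses all arcs. Two mixed graphs are switching equivalent if one is obtained from the other by a sequence of three-way switchings and taking converses. *)

theory Defs
  imports "Jordan_Normal_Form.Char_Poly" "HOL-Computational_Algebra.Polynomial"
begin

(* A mixed graph
   is a pair (E, A): E the undirected edges (symmetric), A the arcs
   (A u v means the arc from u to v). *)

type_synonym rel = "nat \<Rightarrow> nat \<Rightarrow> bool"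
type_synonym mixed_graph = "rel \<times> rel"

definition simple_graph :: "nat \<Rightarrow> rel \<Rightarrow> bool" where
  "simple_graph n E \<longleftrightarrow> (\<forall>u v. E u v \<longrightarrow> u < n \<and> v < n \<and> u \<noteq> v \<and> E v u)"

definition is_mixed_graph :: "nat \<Rightarrow> mixed_graph \<Rightarrow> bool" where
  "is_mixed_graph n M \<longleftrightarrow> simple_graph n (fst M) \<and>
     (\<forall>u v. snd M u v \<longrightarrow> u < n \<and> v < n \<and> u \<noteq> v \<and> \<not> snd M v u
              \<and> \<not> fst M u v)"

definition underlying :: "mixed_graph \<Rightarrow> rel" where
  "underlying M u v \<longleftrightarrow> fst M u v \<or> snd M u v \<or> snd M v u"

definition connected_graph :: "nat \<Rightarrow> rel \<Rightarrow> bool" where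
  "connected_graph n E \<longleftrightarrow> 0 < n \<and> (\<forall>u<n. \<forall>v<n. E\<^sup>*\<^sup>* u v)"

definition spanning_subgraph :: "rel \<Rightarrow> rel \<Rightarrow> bool" where
  "spanning_subgraph H G \<longleftrightarrow> (\<forall>u v. H u v \<longrightarrow> G u v)"

definition undirected :: "rel \<Rightarrow> mixed_graph" where
  "undirected E = (E, (\<lambda>_ _. False))"

definition omega :: complex where
  "omega = Complex (1/2) (sqrt 3 / 2)"

definition T6 :: "complex set" where
  "T6 = {1, -1, omega, cnj omega, - omega, - cnj omega}"

definition herm_adj :: "nat \<Rightarrow> mixed_graph \<Rightarrow> complex mat" where
  "herm_adj n M = mat n n (\<lambda>(u, v).
      if snd M u v then omega else if snd M v u then cnj omega
      else if fst M u v then 1 else 0)"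

definition eigenvalues :: "nat \<Rightarrow> mixed_graph \<Rightarrow> complex multiset" where
  "eigenvalues n M = proots (char_poly (herm_adj n M))"

definition cospectral :: "nat \<Rightarrow> mixed_graph \<Rightarrow> mixed_graph \<Rightarrow> bool" where
  "cospectral n M1 M2 \<longleftrightarrow> eigenvalues n M1 = eigenvalues n M2"

(* largest eigenvalue (all eigenvalues are real since N is Hermitian) *)
definition lambda1 :: "nat \<Rightarrow> mixed_graph \<Rightarrow> real" where
  "lambda1 n M = Max {x. eigenvalue (herm_adj n M) (complex_of_real x)}"

(* a partition into the six classes V_j, j \<in> T6, is a labelling p *)
definition partition6 :: "nat \<Rightarrow> (nat \<Rightarrow> complex) \<Rightarrow> bool" where
  "partition6 n p \<longleftrightarrow> (\<forall>v<n. p v \<in> T6)"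

definition admissible :: "nat \<Rightarrow> mixed_graph \<Rightarrow> (nat \<Rightarrow> complex) \<Rightarrow> bool" where
  "admissible n M p \<longleftrightarrow> partition6 n p \<and>
     (\<forall>x y. fst M x y \<longrightarrow> p y = p x \<or> p y = omega * p x \<or> p x = omega * p y) \<and>
     (\<forall>x y. snd M x y \<longrightarrow> p y = p x \<or> p y = cnj omega * p x \<or> p y = - omega * p x)"

definition three_way_switch :: "(nat \<Rightarrow> complex) \<Rightarrow> mixed_graph \<Rightarrow> mixed_graph" where
  "three_way_switch p M =
     ((\<lambda>x y. (fst M x y \<and> p x = p y)
           \<or> (snd M x y \<and> p y = cnj omega * p x)
           \<or> (snd M y x \<and> p x = cnj omega * p y)),
      (\<lambda>x y. (snd M x y \<and> p x = p y)
           \<or> (fst M x y \<and> p y = omega * p x)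
           \<or> (snd M y x \<and> p x = - omega * p y)))"

definition converse_mixed :: "mixed_graph \<Rightarrow> mixed_graph" where
  "converse_mixed M = (fst M, (\<lambda>x y. snd M y x))"

definition switch_step :: "nat \<Rightarrow> mixed_graph \<Rightarrow> mixed_graph \<Rightarrow> bool" where
  "switch_step n M M' \<longleftrightarrow>
     (\<exists>p. admissible n M p \<and> M' = three_way_switch p M) \<or> M' = converse_mixed M"

definition switching_equivalent :: "nat \<Rightarrow> mixed_graph \<Rightarrow> mixed_graph \<Rightarrow> bool" where
  "switching_equivalent n M1 M2 \<longleftrightarrow> (switch_step n)\<^sup>*\<^sup>* M1 M2 \<or> (switch_step n)\<^sup>*\<^sup>* M2 M1"

end

theory Submission
  imports Defs "HOL-Analysis.Analysis" "Jordan_Normal_Form.Spectral_Radius"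
begin

definition ent :: "mixed_graph \<Rightarrow> nat \<Rightarrow> nat \<Rightarrow> complex" where
  "ent M u v = (if snd M u v then omega else if snd M v u then cnj omega else if fst M u v then 1 else 0)"

lemma s3: "sqrt 3 * sqrt 3 = 3" by simp
lemma om_def: "omega = Complex (1/2) (sqrt 3/2)" by (rule omega_def)
lemma cnj_om: "cnj omega = Complex (1/2) (- sqrt 3/2)" by (simp add: omega_def complex_eq_iff)
lemma om_sum: "omega + cnj omega = 1" by (simp add: om_def cnj_om complex_eq_iff)
lemma om_prod: "omega * cnj omega = 1" by (simp add: om_def cnj_om complex_eq_iff s3)
lemma om_prod': "cnj omega * omega = 1" using om_prod by (simp add: mult.commute)

lemma T6_iff: "z \<in> T6 \<longleftrightarrow> z^6 = 1"
proof -
  have A: "(z - omega)*(z - cnj omega) = z^2 - z + 1"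
  proof -
    have "(z - omega)*(z - cnj omega) = z^2 - (omega + cnj omega) * z + omega * cnj omega"
      by (simp add: algebra_simps power2_eq_square)
    also have "\<dots> = z^2 - z + 1" by (simp add: om_sum om_prod)
    finally show ?thesis .
  qed
  have B: "(z + omega)*(z + cnj omega) = z^2 + z + 1"
  proof -
    have "(z + omega)*(z + cnj omega) = z^2 + (omega + cnj omega) * z + omega * cnj omega"
      by (simp add: algebra_simps power2_eq_square)
    also have "\<dots> = z^2 + z + 1" by (simp add: om_sum om_prod)
    finally show ?thesis .
  qed
  have f: "z^6 - 1 = (z - 1)*(z + 1)*((z - omega)*(z - cnj omega))*((z + omega)*(z + cnj omega))"
    unfolding A B by (simp add: algebra_simps power2_eq_square eval_nat_numeral)
  have "z^6 = 1 \<longleftrightarrow> z^6 - 1 = 0" by simp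
  also have "\<dots> \<longleftrightarrow> z \<in> T6" unfolding f T6_def
    by (simp only: mult_eq_0_iff add_eq_0_iff2 right_minus_eq insert_iff empty_iff simp_thms disj_assoc)
  finally show ?thesis by simp
qed

lemma T6_eq: "T6 = {z. z^6 = 1}" using T6_iff by auto

lemma T6_mult: "a \<in> T6 \<Longrightarrow> b \<in> T6 \<Longrightarrow> a * b \<in> T6"
  by (simp add: T6_eq power_mult_distrib)
lemma T6_cnj: "a \<in> T6 \<Longrightarrow> cnj a \<in> T6"
  by (simp add: T6_eq flip: complex_cnj_power)
lemma T6_norm: "a \<in> T6 \<Longrightarrow> norm a = 1"
proof -
  assume "a \<in> T6"
  then have "norm a ^ 6 = 1" by (simp add: T6_eq flip: norm_power)
  then show ?thesis using power_eq_iff_eq_base[of 6 "norm a" 1] by simp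
qed
lemma T6_nz: "a \<in> T6 \<Longrightarrow> a \<noteq> 0" using T6_norm by force
lemma T6_cnj_mult: "a \<in> T6 \<Longrightarrow> cnj a * a = 1"
  using T6_norm by (metis complex_norm_square mult.commute of_real_1 power_one)
lemma T6_om: "omega \<in> T6" "cnj omega \<in> T6" "1 \<in> T6" "- omega \<in> T6" by (auto simp: T6_def)

lemma T6_vals: "r \<in> T6 \<Longrightarrow> r = 1 \<or> r = -1 \<or> r = Complex (1/2) (sqrt 3/2) \<or> r = Complex (1/2) (- sqrt 3/2)
   \<or> r = Complex (-1/2) (- sqrt 3/2) \<or> r = Complex (-1/2) (sqrt 3/2)"
  by (auto simp: T6_def om_def cnj_om complex_eq_iff)

lemma atom_tab_0: "((1::complex) = 1) = True" by (simp add: complex_eq_iff om_def cnj_om s3)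
lemma atom_tab_1: "(1 = omega) = False" by (simp add: complex_eq_iff om_def cnj_om s3)
lemma atom_tab_2: "(omega * (1) = 1) = False" by (simp add: complex_eq_iff om_def cnj_om s3)
lemma atom_tab_3: "(1 = cnj omega) = False" by (simp add: complex_eq_iff om_def cnj_om s3)
lemma atom_tab_4: "(1 = - omega) = False" by (simp add: complex_eq_iff om_def cnj_om s3)
lemma atom_tab_5: "(cnj omega * (1) = 1) = False" by (simp add: complex_eq_iff om_def cnj_om s3)
lemma atom_tab_6: "(- omega * (1) = 1) = False" by (simp add: complex_eq_iff om_def cnj_om s3)
lemma atom_tab_7: "((-1::complex) = 1) = False" by (simp add: complex_eq_iff om_def cnj_om s3)
lemma atom_tab_8: "(-1 = omega) = False" by (simp add: complex_eq_iff om_def cnj_om s3)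
lemma atom_tab_9: "(omega * (-1) = 1) = False" by (simp add: complex_eq_iff om_def cnj_om s3)
lemma atom_tab_10: "(-1 = cnj omega) = False" by (simp add: complex_eq_iff om_def cnj_om s3)
lemma atom_tab_11: "(-1 = - omega) = False" by (simp add: complex_eq_iff om_def cnj_om s3)
lemma atom_tab_12: "(cnj omega * (-1) = 1) = False" by (simp add: complex_eq_iff om_def cnj_om s3)
lemma atom_tab_13: "(- omega * (-1) = 1) = False" by (simp add: complex_eq_iff om_def cnj_om s3)
lemma atom_tab_14: "(omega = 1) = False" by (simp add: complex_eq_iff om_def cnj_om s3)
lemma atom_tab_15: "(omega = omega) = True" by (simp add: complex_eq_iff om_def cnj_om s3)
lemma atom_tab_16: "(omega * (omega) = 1) = False" by (simp add: complex_eq_iff om_def cnj_om s3)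
lemma atom_tab_17: "(omega = cnj omega) = False" by (simp add: complex_eq_iff om_def cnj_om s3)
lemma atom_tab_18: "(omega = - omega) = False" by (simp add: complex_eq_iff om_def cnj_om s3)
lemma atom_tab_19: "(cnj omega * (omega) = 1) = True" by (simp add: complex_eq_iff om_def cnj_om s3)
lemma atom_tab_20: "(- omega * (omega) = 1) = False" by (simp add: complex_eq_iff om_def cnj_om s3)
lemma atom_tab_21: "(cnj omega = 1) = False" by (simp add: complex_eq_iff om_def cnj_om s3)
lemma atom_tab_22: "(cnj omega = omega) = False" by (simp add: complex_eq_iff om_def cnj_om s3)
lemma atom_tab_23: "(omega * (cnj omega) = 1) = True" by (simp add: complex_eq_iff om_def cnj_om s3)
lemma atom_tab_24: "(cnj omega = cnj omega) = True" by (simp add: complex_eq_iff om_def cnj_om s3)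
lemma atom_tab_25: "(cnj omega = - omega) = False" by (simp add: complex_eq_iff om_def cnj_om s3)
lemma atom_tab_26: "(cnj omega * (cnj omega) = 1) = False" by (simp add: complex_eq_iff om_def cnj_om s3)
lemma atom_tab_27: "(- omega * (cnj omega) = 1) = False" by (simp add: complex_eq_iff om_def cnj_om s3)
lemma atom_tab_28: "(- omega = 1) = False" by (simp add: complex_eq_iff om_def cnj_om s3)
lemma atom_tab_29: "(- omega = omega) = False" by (simp add: complex_eq_iff om_def cnj_om s3)
lemma atom_tab_30: "(omega * (- omega) = 1) = False" by (simp add: complex_eq_iff om_def cnj_om s3)
lemma atom_tab_31: "(- omega = cnj omega) = False" by (simp add: complex_eq_iff om_def cnj_om s3)
lemma atom_tab_32: "(- omega = - omega) = True" by (simp add: complex_eq_iff om_def cnj_om s3)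
lemma atom_tab_33: "(cnj omega * (- omega) = 1) = False" by (simp add: complex_eq_iff om_def cnj_om s3)
lemma atom_tab_34: "(- omega * (- omega) = 1) = False" by (simp add: complex_eq_iff om_def cnj_om s3)
lemma atom_tab_35: "(- cnj omega = 1) = False" by (simp add: complex_eq_iff om_def cnj_om s3)
lemma atom_tab_36: "(- cnj omega = omega) = False" by (simp add: complex_eq_iff om_def cnj_om s3)
lemma atom_tab_37: "(omega * (- cnj omega) = 1) = False" by (simp add: complex_eq_iff om_def cnj_om s3)
lemma atom_tab_38: "(- cnj omega = cnj omega) = False" by (simp add: complex_eq_iff om_def cnj_om s3)
lemma atom_tab_39: "(- cnj omega = - omega) = False" by (simp add: complex_eq_iff om_def cnj_om s3)
lemma atom_tab_40: "(cnj omega * (- cnj omega) = 1) = False" by (simp add: complex_eq_iff om_def cnj_om s3)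
lemma atom_tab_41: "(- omega * (- cnj omega) = 1) = True" by (simp add: complex_eq_iff om_def cnj_om s3)
lemmas atom_tab = atom_tab_0 atom_tab_1 atom_tab_2 atom_tab_3 atom_tab_4 atom_tab_5 atom_tab_6 atom_tab_7 atom_tab_8 atom_tab_9 atom_tab_10 atom_tab_11 atom_tab_12 atom_tab_13 atom_tab_14 atom_tab_15 atom_tab_16 atom_tab_17 atom_tab_18 atom_tab_19 atom_tab_20 atom_tab_21 atom_tab_22 atom_tab_23 atom_tab_24 atom_tab_25 atom_tab_26 atom_tab_27 atom_tab_28 atom_tab_29 atom_tab_30 atom_tab_31 atom_tab_32 atom_tab_33 atom_tab_34 atom_tab_35 atom_tab_36 atom_tab_37 atom_tab_38 atom_tab_39 atom_tab_40 atom_tab_41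

lemma r_from: "omega * r = 1 \<Longrightarrow> r = cnj omega" "cnj omega * r = 1 \<Longrightarrow> r = omega"
  "- omega * r = 1 \<Longrightarrow> r = - cnj omega"
proof -
  show "omega * r = 1 \<Longrightarrow> r = cnj omega"
    by (metis om_prod' mult.assoc mult_1_left mult_1_right)
  show "cnj omega * r = 1 \<Longrightarrow> r = omega"
    by (metis om_prod mult.assoc mult_1_left mult_1_right)
  show "- omega * r = 1 \<Longrightarrow> r = - cnj omega"
    by (metis om_prod' mult.assoc mult_1_left mult_1_right mult_minus_left minus_mult_right minus_minus)
qed

lemma prods: "omega * - omega = cnj omega" "cnj omega * - cnj omega = omega"
  by (simp_all add: complex_eq_iff om_def cnj_om s3)

lemma tgt_lemma:
  fixes f f' s t :: bool and r :: complex
  assumes v1: "f \<Longrightarrow> \<not> s \<and> \<not> t \<and> f'"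
   and v2: "s \<Longrightarrow> \<not> t \<and> \<not> f \<and> \<not> f'"
   and v3: "t \<Longrightarrow> \<not> s \<and> \<not> f \<and> \<not> f'"
   and v4: "f' \<Longrightarrow> f"
   and a1: "f \<Longrightarrow> r = 1 \<or> r = omega \<or> omega * r = 1"
   and a2: "s \<Longrightarrow> r = 1 \<or> r = cnj omega \<or> r = - omega"
   and a3: "t \<Longrightarrow> r = 1 \<or> cnj omega * r = 1 \<or> - omega * r = 1"
  shows "(if (s \<and> r = 1) \<or> (f \<and> r = omega) \<or> (t \<and> - omega * r = 1) then omega
     else if (t \<and> r = 1) \<or> (f' \<and> omega * r = 1) \<or> (s \<and> r = - omega) then cnj omega
     else if (f \<and> r = 1) \<or> (s \<and> r = cnj omega) \<or> (t \<and> cnj omega * r = 1) then 1 else 0)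
     = (if s then omega else if t then cnj omega else if f then 1 else 0) * r"
proof (cases f)
  case True
  with v1 have ns: "\<not> s" "\<not> t" "f'" by auto
  from a1 True have "r = 1 \<or> r = omega \<or> r = cnj omega" using r_from by blast
  then show ?thesis using True ns
    by (elim disjE; simp only: atom_tab simp_thms if_True if_False mult_1_left mult_1_right)
next
  case False
  with v4 have nf: "\<not> f'" by auto
  show ?thesis
  proof (cases s)
    case True
    with v2 have ns: "\<not> t" by auto
    from a2 True have "r = 1 \<or> r = cnj omega \<or> r = - omega" by blast
    then show ?thesis using True ns False nf
      by (elim disjE; simp only: atom_tab prods om_prod simp_thms if_True if_False mult_1_left mult_1_right)
  next
    case Fs: False
    show ?thesis
    proof (cases t)
      case True
      from a3 True have "r = 1 \<or> r = omega \<or> r = - cnj omega" using r_from by blast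
      then show ?thesis using True Fs False nf
        by (elim disjE; simp only: atom_tab prods om_prod' simp_thms if_True if_False mult_1_left mult_1_right)
    next
      case Ft: False
      then show ?thesis using Fs False nf by simp
    qed
  qed
qed


lemma switch_ent:
  assumes "is_mixed_graph n M" "admissible n M p" "x<n" "y<n"
  shows "ent (three_way_switch p M) x y = cnj (p x) * ent M x y * p y"
proof -
  have px: "p x \<in> T6" and py: "p y \<in> T6" using assms unfolding admissible_def partition6_def by auto
  define r where "r = p y * cnj (p x)"
  have pyr: "p y = r * p x" unfolding r_def using T6_cnj_mult[OF px] by (simp add: mult.assoc)
  have nz: "p x \<noteq> 0" using T6_nz[OF px] .
  have v1: "fst M x y \<Longrightarrow> \<not> snd M x y \<and> \<not> snd M y x \<and> fst M y x"
   and v2: "snd M x y \<Longrightarrow> \<not> snd M y x \<and> \<not> fst M x y \<and> \<not> fst M y x"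
   and v3: "snd M y x \<Longrightarrow> \<not> snd M x y \<and> \<not> fst M x y \<and> \<not> fst M y x"
   and v4: "fst M y x \<Longrightarrow> fst M x y"
    using assms(1) unfolding is_mixed_graph_def simple_graph_def by blast+
  have a1: "fst M x y \<Longrightarrow> p y = p x \<or> p y = omega * p x \<or> p x = omega * p y"
   and a2: "snd M x y \<Longrightarrow> p y = p x \<or> p y = cnj omega * p x \<or> p y = - omega * p x"
   and a3: "snd M y x \<Longrightarrow> p x = p y \<or> p x = cnj omega * p y \<or> p x = - omega * p y"
    using assms(2) unfolding admissible_def by blast+
  have cancel: "\<And>c d. c * p x = d * p x \<longleftrightarrow> c = d" using nz by simp
  have e: "p y = p x \<longleftrightarrow> r = 1" "p x = p y \<longleftrightarrow> r = 1"
      "p y = omega * p x \<longleftrightarrow> r = omega"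
      "p x = omega * p y \<longleftrightarrow> omega * r = 1"
      "p y = cnj omega * p x \<longleftrightarrow> r = cnj omega"
      "p y = - omega * p x \<longleftrightarrow> r = - omega"
      "p x = cnj omega * p y \<longleftrightarrow> cnj omega * r = 1"
      "p x = - omega * p y \<longleftrightarrow> - omega * r = 1"
    unfolding pyr using cancel[of r 1] cancel[of 1 r] cancel[of r omega] cancel[of 1 "omega * r"]
       cancel[of r "cnj omega"] cancel[of r "- omega"] cancel[of 1 "cnj omega * r"] cancel[of 1 "- omega * r"]
    by (simp_all add: mult.assoc)
  have t: "cnj (p x) * ent M x y * p y = ent M x y * r"
    unfolding pyr using T6_cnj_mult[OF px] by (simp add: ac_simps)
  have tg: "ent (three_way_switch p M) x y = ent M x y * r"
    unfolding ent_def three_way_switch_def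
    apply (simp only: fst_conv snd_conv e)
    by (rule tgt_lemma[OF v1 v2 v3 v4 a1[unfolded e] a2[unfolded e] a3[unfolded e]])
  show ?thesis unfolding t tg ..
qed

definition qf :: "nat \<Rightarrow> (nat \<Rightarrow> nat \<Rightarrow> real) \<Rightarrow> (nat \<Rightarrow> real) \<Rightarrow> real" where
  "qf n a y = (\<Sum>i<n. \<Sum>j<n. a i j * y i * y j)"

definition nsq :: "nat \<Rightarrow> (nat \<Rightarrow> real) \<Rightarrow> real" where
  "nsq n y = (\<Sum>i<n. (y i)^2)"

lemma quad_zero:
  fixes c d :: real
  assumes "\<And>t. 2 * t * c + t^2 * d \<le> 0"
  shows "c = 0"
proof (rule ccontr)
  assume c: "c \<noteq> 0"
  obtain D where D: "D = \<bar>d\<bar> + 1" by blast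
  have pos: "D > 0" and dD: "2 * D + d > 0" using D by (auto simp: abs_if)
  define t where "t = c / D"
  have "2 * t * c + t^2 * d = c^2 * (2 * D + d) / D^2"
    unfolding t_def using pos by (simp add: field_simps power2_eq_square)
  moreover have "c^2 * (2 * D + d) / D^2 > 0"
    using c pos dD by (intro divide_pos_pos mult_pos_pos) auto
  ultimately show False using assms[of t] by linarith
qed

lemma qf_update:
  fixes a :: "nat \<Rightarrow> nat \<Rightarrow> real"
  assumes sym: "\<And>i j. a i j = a j i" and i: "i < n"
  shows "qf n a (\<lambda>k. v k + t * (if k = i then 1 else 0))
        = qf n a v + 2 * t * (\<Sum>j<n. a i j * v j) + t^2 * a i i"
proof -
  let ?e = "\<lambda>k. if k = i then 1 else (0::real)"
  have "qf n a (\<lambda>k. v k + t * ?e k) = (\<Sum>k<n. \<Sum>j<n. a k j * v k * v j + t * (a k j * ?e k * v j)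
       + t * (a k j * v k * ?e j) + t^2 * (a k j * ?e k * ?e j))"
    unfolding qf_def by (intro sum.cong refl) (simp add: algebra_simps power2_eq_square)
  also have "\<dots> = qf n a v + t * (\<Sum>k<n. \<Sum>j<n. a k j * ?e k * v j) + t * (\<Sum>k<n. \<Sum>j<n. a k j * v k * ?e j)
      + t^2 * (\<Sum>k<n. \<Sum>j<n. a k j * ?e k * ?e j)"
    unfolding qf_def by (simp add: sum.distrib sum_distrib_left)
  also have "(\<Sum>k<n. \<Sum>j<n. a k j * ?e k * v j) = (\<Sum>k<n. if k = i then (\<Sum>j<n. a i j * v j) else 0)"
    by (intro sum.cong refl) auto
  also have "\<dots> = (\<Sum>j<n. a i j * v j)" using i by simp
  also have "(\<Sum>k<n. \<Sum>j<n. a k j * v k * ?e j) = (\<Sum>k<n. a k i * v k)"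
  proof (intro sum.cong refl)
    fix k assume "k \<in> {..<n}"
    have "(\<Sum>j<n. a k j * v k * ?e j) = (\<Sum>j<n. if j = i then a k i * v k else 0)"
      by (intro sum.cong refl) auto
    also have "\<dots> = a k i * v k" using i by simp
    finally show "(\<Sum>j<n. a k j * v k * ?e j) = a k i * v k" .
  qed
  also have "\<dots> = (\<Sum>j<n. a i j * v j)" using sym by (simp add: mult.commute)
  also have "(\<Sum>k<n. \<Sum>j<n. a k j * ?e k * ?e j) = (\<Sum>k<n. if k = i then a i i else 0)"
  proof (intro sum.cong refl)
    fix k assume "k \<in> {..<n}"
    have "(\<Sum>j<n. a k j * ?e k * ?e j) = (\<Sum>j<n. if j = i then a k i * ?e k else 0)"
      by (intro sum.cong refl) auto
    also have "\<dots> = a k i * ?e k" using i by simp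
    finally show "(\<Sum>j<n. a k j * ?e k * ?e j) = (if k = i then a i i else 0)" by simp
  qed
  also have "\<dots> = a i i" using i by simp
  finally show ?thesis by simp
qed

lemma nsq_update:
  assumes i: "i < n"
  shows "nsq n (\<lambda>k. v k + t * (if k = i then 1 else 0)) = nsq n v + 2 * t * v i + t^2"
proof -
  have "nsq n (\<lambda>k. v k + t * (if k = i then 1 else 0)) =
     (\<Sum>k<n. (v k)^2 + (if k = i then 2 * t * v i + t^2 else 0))"
    unfolding nsq_def by (intro sum.cong refl) (simp add: power2_eq_square algebra_simps)
  also have "\<dots> = nsq n v + 2 * t * v i + t^2"
    unfolding nsq_def using i by (simp add: sum.distrib)
  finally show ?thesis .
qed

lemma psd_eq:
  fixes a :: "nat \<Rightarrow> nat \<Rightarrow> real"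
  assumes sym: "\<And>i j. a i j = a j i"
    and le: "\<And>y. qf n a y \<le> m * nsq n y"
    and eq: "qf n a v = m * nsq n v"
    and i: "i < n"
  shows "(\<Sum>j<n. a i j * v j) = m * v i"
proof -
  have "2 * t * ((\<Sum>j<n. a i j * v j) - m * v i) + t^2 * (a i i - m) \<le> 0" for t
    using le[of "\<lambda>k. v k + t * (if k = i then 1 else 0)"] unfolding qf_update[OF sym i] nsq_update[OF i]
    using eq by (simp add: algebra_simps)
  from quad_zero[OF this] show ?thesis by simp
qed


lemma qf_scale: "qf n a (\<lambda>i. c * y i) = c^2 * qf n a y"
  unfolding qf_def by (simp add: sum_distrib_left power2_eq_square algebra_simps)
lemma nsq_scale: "nsq n (\<lambda>i. c * y i) = c^2 * nsq n y"
  unfolding nsq_def by (simp add: sum_distrib_left power2_eq_square algebra_simps)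
lemma nsq_nonneg: "nsq n y \<ge> 0" unfolding nsq_def by (simp add: sum_nonneg)
lemma nsq_zero: "nsq n y = 0 \<Longrightarrow> i < n \<Longrightarrow> y i = 0"
  unfolding nsq_def by (subst (asm) sum_nonneg_eq_0_iff) auto
lemma qf_zero: "(\<And>i. i < n \<Longrightarrow> y i = 0) \<Longrightarrow> qf n a y = 0"
  unfolding qf_def by simp

lemma qf_cont: "continuous_on UNIV (qf n a)"
  unfolding qf_def by (intro continuous_intros continuous_on_product_coordinates)
lemma nsq_cont: "continuous_on UNIV (nsq n)"
  unfolding nsq_def by (intro continuous_intros continuous_on_product_coordinates)

lemma sphere_compact: "compact {y :: nat \<Rightarrow> real. (\<forall>i. n \<le> i \<longrightarrow> y i = 0) \<and> nsq n y = 1}"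
proof -
  let ?K = "PiE UNIV (\<lambda>i. if i < n then {-1..1::real} else {0})"
  have cK: "compact ?K"
  proof -
    have "compactin (product_topology (\<lambda>_. euclidean) UNIV) ?K"
      unfolding compactin_PiE by auto
    then show ?thesis by (simp add: euclidean_product_topology)
  qed
  have cl: "closed {y :: nat \<Rightarrow> real. (\<forall>i. n \<le> i \<longrightarrow> y i = 0) \<and> nsq n y = 1}"
  proof -
    have "closed (\<Inter>i\<in>{i. n \<le> i}. {y :: nat \<Rightarrow> real. y i = 0})"
      by (intro closed_INT ballI closed_Collect_eq continuous_on_product_coordinates continuous_on_const)
    moreover have "closed {y. nsq n y = 1}"
      by (intro closed_Collect_eq nsq_cont continuous_on_const)
    ultimately have "closed ((\<Inter>i\<in>{i. n \<le> i}. {y :: nat \<Rightarrow> real. y i = 0}) \<inter> {y. nsq n y = 1})"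
      by blast
    moreover have "(\<Inter>i\<in>{i. n \<le> i}. {y :: nat \<Rightarrow> real. y i = 0}) \<inter> {y. nsq n y = 1}
        = {y :: nat \<Rightarrow> real. (\<forall>i. n \<le> i \<longrightarrow> y i = 0) \<and> nsq n y = 1}" by auto
    ultimately show ?thesis by simp
  qed
  have sub: "{y :: nat \<Rightarrow> real. (\<forall>i. n \<le> i \<longrightarrow> y i = 0) \<and> nsq n y = 1} \<subseteq> ?K"
  proof
    fix y :: "nat \<Rightarrow> real" assume y: "y \<in> {y. (\<forall>i. n \<le> i \<longrightarrow> y i = 0) \<and> nsq n y = 1}"
    show "y \<in> ?K"
    proof (rule PiE_I)
      fix i :: nat
      show "y i \<in> (if i < n then {-1..1} else {0})"
      proof (cases "i < n")
        case True
        have "(y i)^2 \<le> nsq n y" unfolding nsq_def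
          using True by (intro member_le_sum) auto
        then have "(y i)^2 \<le> 1" using y by simp
        then have "\<bar>y i\<bar> \<le> 1" using abs_square_le_1 by blast
        then show ?thesis using True by auto
      next
        case False then show ?thesis using y by auto
      qed
    qed auto
  qed
  have "compact (?K \<inter> {y :: nat \<Rightarrow> real. (\<forall>i. n \<le> i \<longrightarrow> y i = 0) \<and> nsq n y = 1})"
    by (rule compact_Int_closed[OF cK cl])
  moreover have "?K \<inter> {y :: nat \<Rightarrow> real. (\<forall>i. n \<le> i \<longrightarrow> y i = 0) \<and> nsq n y = 1}
     = {y :: nat \<Rightarrow> real. (\<forall>i. n \<le> i \<longrightarrow> y i = 0) \<and> nsq n y = 1}" using sub by blast
  ultimately show ?thesis by simp
qed


lemma qf_cong: "(\<And>i. i < n \<Longrightarrow> y i = z i) \<Longrightarrow> qf n a y = qf n a z"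
  unfolding qf_def by (intro sum.cong refl) auto
lemma nsq_cong: "(\<And>i. i < n \<Longrightarrow> y i = z i) \<Longrightarrow> nsq n y = nsq n z"
  unfolding nsq_def by (intro sum.cong refl) auto

lemma rayleigh_max:
  fixes a :: "nat \<Rightarrow> nat \<Rightarrow> real"
  assumes n: "n > 0" and sym: "\<And>i j. a i j = a j i"
  shows "\<exists>m v. (\<exists>i<n. v i \<noteq> 0) \<and> (\<forall>i<n. (\<Sum>j<n. a i j * v j) = m * v i) \<and> (\<forall>y. qf n a y \<le> m * nsq n y)"
proof -
  define S where "S = {y :: nat \<Rightarrow> real. (\<forall>i. n \<le> i \<longrightarrow> y i = 0) \<and> nsq n y = 1}"
  define y0 where "y0 = (\<lambda>i::nat. if i = 0 then 1 else (0::real))"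
  have "nsq n y0 = (\<Sum>i<n. if i = 0 then 1 else 0)" unfolding nsq_def y0_def by (intro sum.cong refl) auto
  also have "\<dots> = 1" using n by simp
  finally have "nsq n y0 = 1" .
  then have "y0 \<in> S" unfolding S_def y0_def using n by auto
  then have ne: "S \<noteq> {}" by auto
  obtain v where v: "v \<in> S" and vmax: "\<forall>y\<in>S. qf n a y \<le> qf n a v"
    using continuous_attains_sup[OF sphere_compact[of n, folded S_def] ne continuous_on_subset[OF qf_cont subset_UNIV]]
    by blast
  define m where "m = qf n a v"
  have nv: "nsq n v = 1" using v unfolding S_def by auto
  have le: "qf n a y \<le> m * nsq n y" for y
  proof (cases "nsq n y = 0")
    case True
    then have "qf n a y = 0" using nsq_zero qf_zero by blast
    then show ?thesis using True by simp
  next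
    case False
    then have pos: "nsq n y > 0" using nsq_nonneg[of n y] by linarith
    define c where "c = 1 / sqrt (nsq n y)"
    have c2: "c^2 = 1 / nsq n y" unfolding c_def using pos by (simp add: power_divide)
    define y' where "y' = (\<lambda>i. if i < n then c * y i else 0)"
    have "nsq n y' = c^2 * nsq n y" unfolding nsq_scale[symmetric] by (rule nsq_cong) (simp add: y'_def)
    then have "nsq n y' = 1" using c2 pos by simp
    then have "y' \<in> S" unfolding S_def y'_def by auto
    then have "qf n a y' \<le> m" using vmax m_def by auto
    moreover have "qf n a y' = c^2 * qf n a y" unfolding qf_scale[symmetric] by (rule qf_cong) (simp add: y'_def)
    ultimately have "qf n a y / nsq n y \<le> m" using c2 by simp
    then show ?thesis using pos by (simp add: divide_le_eq mult.commute)
  qed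
  have eq: "qf n a v = m * nsq n v" using nv m_def by simp
  have ev: "\<forall>i<n. (\<Sum>j<n. a i j * v j) = m * v i"
    using psd_eq[OF sym le eq] by blast
  have "\<exists>i<n. v i \<noteq> 0"
  proof (rule ccontr)
    assume "\<not> (\<exists>i<n. v i \<noteq> 0)"
    then have "nsq n v = 0" unfolding nsq_def by simp
    then show False using nv by simp
  qed
  then show ?thesis using ev le by blast
qed

lemma herm_adj_carrier: "herm_adj n M \<in> carrier_mat n n"
  unfolding herm_adj_def by simp
lemma herm_adj_index: "i < n \<Longrightarrow> j < n \<Longrightarrow> herm_adj n M $$ (i,j) = ent M i j"
  unfolding herm_adj_def ent_def by simp

lemma eigen_bridge:
  "eigenvalue (herm_adj n M) mu \<longleftrightarrow>
   (\<exists>v. (\<exists>i<n. v i \<noteq> 0) \<and> (\<forall>i<n. (\<Sum>j<n. ent M i j * v j) = mu * v i))"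
proof
  assume "eigenvalue (herm_adj n M) mu"
  then obtain w where w: "w \<in> carrier_vec n" "w \<noteq> 0\<^sub>v n" "herm_adj n M *\<^sub>v w = mu \<cdot>\<^sub>v w"
    unfolding eigenvalue_def eigenvector_def using herm_adj_carrier[of n M] by auto
  have "\<exists>i<n. vec_index w i \<noteq> 0"
  proof (rule ccontr)
    assume "\<not> (\<exists>i<n. vec_index w i \<noteq> 0)"
    then have "w = 0\<^sub>v n" using w(1) by (intro eq_vecI) auto
    then show False using w(2) by simp
  qed
  moreover have "(\<Sum>j<n. ent M i j * vec_index w j) = mu * vec_index w i" if i: "i < n" for i
  proof -
    have "vec_index (herm_adj n M *\<^sub>v w) i = scalar_prod (Matrix.row (herm_adj n M) i) w" using i herm_adj_carrier[of n M] by simp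
    also have "\<dots> = (\<Sum>j<n. ent M i j * vec_index w j)"
      unfolding scalar_prod_def using w(1) i herm_adj_carrier[of n M]
      by (auto simp: herm_adj_index lessThan_atLeast0 intro!: sum.cong)
    finally show ?thesis using w(3) i w(1) by simp
  qed
  ultimately show "\<exists>v. (\<exists>i<n. v i \<noteq> 0) \<and> (\<forall>i<n. (\<Sum>j<n. ent M i j * v j) = mu * v i)"
    by (intro exI[of _ "\<lambda>i. vec_index w i"]) auto
next
  assume "\<exists>v. (\<exists>i<n. v i \<noteq> 0) \<and> (\<forall>i<n. (\<Sum>j<n. ent M i j * v j) = mu * v i)"
  then obtain v where v: "\<exists>i<n. v i \<noteq> 0" "\<And>i. i<n \<Longrightarrow> (\<Sum>j<n. ent M i j * v j) = mu * v i" by blast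
  define w where "w = Matrix.vec n v"
  have wc: "w \<in> carrier_vec n" unfolding w_def by simp
  have "w \<noteq> 0\<^sub>v n"
  proof
    assume w0: "w = 0\<^sub>v n"
    obtain i where i: "i < n" "v i \<noteq> 0" using v(1) by blast
    have "vec_index w i = v i" using i unfolding w_def by simp
    moreover have "vec_index w i = 0" using i unfolding w0 by simp
    ultimately show False using i by simp
  qed
  moreover have "herm_adj n M *\<^sub>v w = mu \<cdot>\<^sub>v w"
  proof (rule eq_vecI)
    fix i assume "i < dim_vec (mu \<cdot>\<^sub>v w)"
    then have i: "i < n" using wc by simp
    have "vec_index (herm_adj n M *\<^sub>v w) i = scalar_prod (Matrix.row (herm_adj n M) i) w" using i herm_adj_carrier[of n M] by simp
    also have "\<dots> = (\<Sum>j<n. ent M i j * v j)"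
      unfolding scalar_prod_def using wc i herm_adj_carrier[of n M]
      by (auto simp: herm_adj_index lessThan_atLeast0 w_def intro!: sum.cong)
    also have "\<dots> = vec_index (mu \<cdot>\<^sub>v w) i" using v(2)[OF i] i unfolding w_def by simp
    finally show "vec_index (herm_adj n M *\<^sub>v w) i = vec_index (mu \<cdot>\<^sub>v w) i" .
  next
    show "dim_vec (herm_adj n M *\<^sub>v w) = dim_vec (mu \<cdot>\<^sub>v w)" using wc herm_adj_carrier[of n M] by simp
  qed
  ultimately show "eigenvalue (herm_adj n M) mu"
    unfolding eigenvalue_def eigenvector_def using wc herm_adj_carrier[of n M] by auto
qed

lemma ent_herm: assumes "is_mixed_graph n M" shows "ent M j i = cnj (ent M i j)"
proof -
  have f: "fst M i j = fst M j i" using assms unfolding is_mixed_graph_def simple_graph_def by blast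
  have s1: "snd M i j \<Longrightarrow> \<not> snd M j i"
    using assms unfolding is_mixed_graph_def simple_graph_def by blast
  show ?thesis unfolding ent_def f using s1 by (cases "snd M i j"; cases "snd M j i") simp_all
qed

lemma eigen_real:
  assumes M: "is_mixed_graph n M" and ev: "eigenvalue (herm_adj n M) mu"
  shows "mu = of_real (Re mu)"
proof -
  from ev obtain v where v: "\<exists>i<n. v i \<noteq> 0" "\<And>i. i<n \<Longrightarrow> (\<Sum>j<n. ent M i j * v j) = mu * v i"
    unfolding eigen_bridge by blast
  define h where "h = (\<Sum>i<n. cnj (v i) * (\<Sum>j<n. ent M i j * v j))"
  define S where "S = (\<Sum>i<n. cnj (v i) * v i)"
  have hS: "h = mu * S" unfolding h_def S_def using v(2) by (simp add: sum_distrib_left mult.commute mult.left_commute)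
  have "cnj h = (\<Sum>i<n. v i * (\<Sum>j<n. cnj (ent M i j) * cnj (v j)))"
    unfolding h_def by simp
  also have "\<dots> = (\<Sum>i<n. \<Sum>j<n. v i * (ent M j i * cnj (v j)))"
    by (intro sum.cong refl) (simp add: sum_distrib_left ent_herm[OF M, symmetric])
  also have "\<dots> = (\<Sum>j<n. \<Sum>i<n. v i * (ent M j i * cnj (v j)))" by (rule sum.swap)
  also have "\<dots> = h" unfolding h_def
  proof (intro sum.cong refl)
    fix j assume "j \<in> {..<n}"
    have "(\<Sum>i<n. v i * (ent M j i * cnj (v j))) = (\<Sum>i<n. cnj (v j) * (ent M j i * v i))"
      by (intro sum.cong refl) simp
    also have "\<dots> = cnj (v j) * (\<Sum>i<n. ent M j i * v i)" by (simp add: sum_distrib_left)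
    finally show "(\<Sum>i<n. v i * (ent M j i * cnj (v j))) = cnj (v j) * (\<Sum>i<n. ent M j i * v i)" .
  qed
  finally have ch: "cnj h = h" .
  have cS: "cnj S = S" unfolding S_def by (simp add: mult.commute)
  have "S = (\<Sum>i<n. of_real ((cmod (v i))^2))" unfolding S_def
    by (intro sum.cong refl) (metis complex_norm_square mult.commute)
  also have "\<dots> = of_real (\<Sum>i<n. (cmod (v i))^2)" by simp
  finally have "S = of_real (\<Sum>i<n. (cmod (v i))^2)" .
  moreover have "(\<Sum>i<n. (cmod (v i))^2) > 0"
  proof -
    from v(1) obtain i where "i < n" "v i \<noteq> 0" by blast
    then show ?thesis by (intro sum_pos2[of _ i]) auto
  qed
  ultimately have Snz: "S \<noteq> 0" by (metis of_real_eq_0_iff less_irrefl)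
  have "cnj mu * S = mu * S" using ch hS cS by (metis complex_cnj_mult)
  then have "cnj mu = mu" using Snz by simp
  then show ?thesis by (metis Reals_cnj_iff complex_is_Real_iff of_real_Re)
qed

lemma valid_lemma:
  fixes f f' s t :: bool and r :: complex
  assumes v1: "f \<Longrightarrow> \<not> s \<and> \<not> t \<and> f'"
   and v2: "s \<Longrightarrow> \<not> t \<and> \<not> f \<and> \<not> f'"
   and v3: "t \<Longrightarrow> \<not> s \<and> \<not> f \<and> \<not> f'"
   and v4: "f' \<Longrightarrow> f"
   and a1: "f \<Longrightarrow> r = 1 \<or> r = omega \<or> omega * r = 1"
   and a2: "s \<Longrightarrow> r = 1 \<or> r = cnj omega \<or> r = - omega"
   and a3: "t \<Longrightarrow> r = 1 \<or> cnj omega * r = 1 \<or> - omega * r = 1"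
   and A: "(s \<and> r = 1) \<or> (f \<and> r = omega) \<or> (t \<and> - omega * r = 1)"
  shows "\<not> ((t \<and> r = 1) \<or> (f' \<and> omega * r = 1) \<or> (s \<and> r = - omega))
      \<and> \<not> ((f \<and> r = 1) \<or> (s \<and> r = cnj omega) \<or> (t \<and> cnj omega * r = 1))"
proof (cases f)
  case True
  with v1 have ns: "\<not> s" "\<not> t" "f'" by auto
  from a1 True have "r = 1 \<or> r = omega \<or> r = cnj omega" using r_from by blast
  then show ?thesis using True ns A
    by (elim disjE; simp only: atom_tab simp_thms)
next
  case False
  with v4 have nf: "\<not> f'" by auto
  show ?thesis
  proof (cases s)
    case True
    with v2 have ns: "\<not> t" by auto
    from a2 True have "r = 1 \<or> r = cnj omega \<or> r = - omega" by blast
    then show ?thesis using True ns False nf A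
      by (elim disjE; simp only: atom_tab simp_thms)
  next
    case Fs: False
    show ?thesis
    proof (cases t)
      case True
      from a3 True have "r = 1 \<or> r = omega \<or> r = - cnj omega" using r_from by blast
      then show ?thesis using True Fs False nf A
        by (elim disjE; simp only: atom_tab simp_thms)
    next
      case Ft: False
      then show ?thesis using Fs False nf A by simp
    qed
  qed
qed

lemma switch_valid_pair:
  assumes "is_mixed_graph n M" "admissible n M p" "x<n" "y<n"
    and A: "snd (three_way_switch p M) x y"
  shows "\<not> snd (three_way_switch p M) y x \<and> \<not> fst (three_way_switch p M) x y"
proof -
  have px: "p x \<in> T6" and py: "p y \<in> T6" using assms unfolding admissible_def partition6_def by auto
  define r where "r = p y * cnj (p x)"
  have pyr: "p y = r * p x" unfolding r_def using T6_cnj_mult[OF px] by (simp add: mult.assoc)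
  have nz: "p x \<noteq> 0" using T6_nz[OF px] .
  have v1: "fst M x y \<Longrightarrow> \<not> snd M x y \<and> \<not> snd M y x \<and> fst M y x"
   and v2: "snd M x y \<Longrightarrow> \<not> snd M y x \<and> \<not> fst M x y \<and> \<not> fst M y x"
   and v3: "snd M y x \<Longrightarrow> \<not> snd M x y \<and> \<not> fst M x y \<and> \<not> fst M y x"
   and v4: "fst M y x \<Longrightarrow> fst M x y"
    using assms(1) unfolding is_mixed_graph_def simple_graph_def by blast+
  have a1: "fst M x y \<Longrightarrow> p y = p x \<or> p y = omega * p x \<or> p x = omega * p y"
   and a2: "snd M x y \<Longrightarrow> p y = p x \<or> p y = cnj omega * p x \<or> p y = - omega * p x"
   and a3: "snd M y x \<Longrightarrow> p x = p y \<or> p x = cnj omega * p y \<or> p x = - omega * p y"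
    using assms(2) unfolding admissible_def by blast+
  have cancel: "\<And>c d. c * p x = d * p x \<longleftrightarrow> c = d" using nz by simp
  have e: "p y = p x \<longleftrightarrow> r = 1" "p x = p y \<longleftrightarrow> r = 1"
      "p y = omega * p x \<longleftrightarrow> r = omega"
      "p x = omega * p y \<longleftrightarrow> omega * r = 1"
      "p y = cnj omega * p x \<longleftrightarrow> r = cnj omega"
      "p y = - omega * p x \<longleftrightarrow> r = - omega"
      "p x = cnj omega * p y \<longleftrightarrow> cnj omega * r = 1"
      "p x = - omega * p y \<longleftrightarrow> - omega * r = 1"
    unfolding pyr using cancel[of r 1] cancel[of 1 r] cancel[of r omega] cancel[of 1 "omega * r"]
       cancel[of r "cnj omega"] cancel[of r "- omega"] cancel[of 1 "cnj omega * r"] cancel[of 1 "- omega * r"]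
    by (simp_all add: mult.assoc)
  have A': "(snd M x y \<and> r = 1) \<or> (fst M x y \<and> r = omega) \<or> (snd M y x \<and> - omega * r = 1)"
    using A unfolding three_way_switch_def by (simp only: fst_conv snd_conv e)
  have G1: "snd (three_way_switch p M) y x \<longleftrightarrow> (snd M y x \<and> r = 1) \<or> (fst M y x \<and> omega * r = 1) \<or> (snd M x y \<and> r = - omega)"
    unfolding three_way_switch_def by (simp only: fst_conv snd_conv e)
  have G2: "fst (three_way_switch p M) x y \<longleftrightarrow> (fst M x y \<and> r = 1) \<or> (snd M x y \<and> r = cnj omega) \<or> (snd M y x \<and> cnj omega * r = 1)"
    unfolding three_way_switch_def by (simp only: fst_conv snd_conv e)
  have VL: "\<not> ((snd M y x \<and> r = 1) \<or> (fst M y x \<and> omega * r = 1) \<or> (snd M x y \<and> r = - omega))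
      \<and> \<not> ((fst M x y \<and> r = 1) \<or> (snd M x y \<and> r = cnj omega) \<or> (snd M y x \<and> cnj omega * r = 1))"
    by (rule valid_lemma[OF v1 v2 v3 v4 a1[unfolded e] a2[unfolded e] a3[unfolded e] A'])
  show ?thesis unfolding G1 G2 using VL by blast
qed

lemma switch_valid:
  assumes M: "is_mixed_graph n M" and p: "admissible n M p"
  shows "is_mixed_graph n (three_way_switch p M)"
proof -
  have fb: "fst M u v \<Longrightarrow> u < n \<and> v < n \<and> u \<noteq> v \<and> fst M v u" for u v
    using M unfolding is_mixed_graph_def simple_graph_def by blast
  have sb: "snd M u v \<Longrightarrow> u < n \<and> v < n \<and> u \<noteq> v" for u v
    using M unfolding is_mixed_graph_def by blast
  have F: "fst (three_way_switch p M) u v \<Longrightarrow> u < n \<and> v < n \<and> u \<noteq> v \<and> fst (three_way_switch p M) v u" for u v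
  proof -
    assume "fst (three_way_switch p M) u v"
    then have "(fst M u v \<and> p u = p v) \<or> (snd M u v \<and> p v = cnj omega * p u) \<or> (snd M v u \<and> p u = cnj omega * p v)"
      unfolding three_way_switch_def by simp
    then have "(u < n \<and> v < n \<and> u \<noteq> v) \<and> ((fst M v u \<and> p v = p u) \<or> (snd M v u \<and> p u = cnj omega * p v) \<or> (snd M u v \<and> p v = cnj omega * p u))"
    proof (elim disjE conjE)
      assume "fst M u v" "p u = p v" then show ?thesis using fb[of u v] by simp
    next
      assume "snd M u v" "p v = cnj omega * p u" then show ?thesis using sb[of u v] by simp
    next
      assume "snd M v u" "p u = cnj omega * p v" then show ?thesis using sb[of v u] by simp
    qed
    then show ?thesis unfolding three_way_switch_def by simp
  qed
  have S: "snd (three_way_switch p M) u v \<Longrightarrow> u < n \<and> v < n \<and> u \<noteq> v" for u v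
  proof -
    assume "snd (three_way_switch p M) u v"
    then have "snd M u v \<or> fst M u v \<or> snd M v u"
      unfolding three_way_switch_def by auto
    then show ?thesis using fb[of u v] sb[of u v] sb[of v u] by blast
  qed
  show ?thesis unfolding is_mixed_graph_def simple_graph_def
  proof (intro conjI allI impI)
    fix u v assume "fst (three_way_switch p M) u v"
    then show "u < n" "v < n" "u \<noteq> v" "fst (three_way_switch p M) v u" using F by blast+
  next
    fix u v assume a: "snd (three_way_switch p M) u v"
    then show "u < n" "v < n" "u \<noteq> v" using S by blast+
    show "\<not> snd (three_way_switch p M) v u" "\<not> fst (three_way_switch p M) u v"
      using switch_valid_pair[OF M p _ _ a] S[OF a] by blast+
  qed
qed


definition dm :: "nat \<Rightarrow> (nat \<Rightarrow> complex) \<Rightarrow> complex mat" where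
  "dm n f = Matrix.mat n n (\<lambda>(i,j). if i = j then f i else 0)"

lemma dm_carrier[simp]: "dm n f \<in> carrier_mat n n" unfolding dm_def by simp
lemma dm_dims[simp]: "dim_row (dm n f) = n" "dim_col (dm n f) = n" unfolding dm_def by simp_all

lemma dm_mult_left:
  assumes B: "B \<in> carrier_mat n n"
  shows "dm n f * B = Matrix.mat n n (\<lambda>(i,j). f i * B $$ (i,j))"
proof (rule eq_matI)
  fix i j assume "i < dim_row (Matrix.mat n n (\<lambda>(i,j). f i * B $$ (i,j)))" "j < dim_col (Matrix.mat n n (\<lambda>(i,j). f i * B $$ (i,j)))"
  then have i: "i < n" and j: "j < n" by auto
  have "(dm n f * B) $$ (i,j) = scalar_prod (Matrix.row (dm n f) i) (col B j)"
    using i j B by simp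
  also have "\<dots> = (\<Sum>k\<in>{0..<n}. (if i = k then f i else 0) * B $$ (k,j))"
    unfolding scalar_prod_def using i j B by (intro sum.cong) (auto simp: dm_def)
  also have "\<dots> = (\<Sum>k\<in>{0..<n}. if k = i then f i * B $$ (i,j) else 0)"
    by (intro sum.cong) auto
  also have "\<dots> = f i * B $$ (i,j)" using i by simp
  finally show "(dm n f * B) $$ (i,j) = Matrix.mat n n (\<lambda>(i,j). f i * B $$ (i,j)) $$ (i,j)" using i j by simp
qed (use B in auto)

lemma dm_mult_right:
  assumes B: "B \<in> carrier_mat n n"
  shows "B * dm n f = Matrix.mat n n (\<lambda>(i,j). B $$ (i,j) * f j)"
proof (rule eq_matI)
  fix i j assume "i < dim_row (Matrix.mat n n (\<lambda>(i,j). B $$ (i,j) * f j))" "j < dim_col (Matrix.mat n n (\<lambda>(i,j). B $$ (i,j) * f j))"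
  then have i: "i < n" and j: "j < n" by auto
  have "(B * dm n f) $$ (i,j) = scalar_prod (Matrix.row B i) (col (dm n f) j)"
    using i j B by simp
  also have "\<dots> = (\<Sum>k\<in>{0..<n}. B $$ (i,k) * (if k = j then f j else 0))"
    unfolding scalar_prod_def using i j B by (intro sum.cong) (auto simp: dm_def)
  also have "\<dots> = (\<Sum>k\<in>{0..<n}. if k = j then B $$ (i,j) * f j else 0)"
    by (intro sum.cong) auto
  also have "\<dots> = B $$ (i,j) * f j" using j by simp
  finally show "(B * dm n f) $$ (i,j) = Matrix.mat n n (\<lambda>(i,j). B $$ (i,j) * f j) $$ (i,j)" using i j by simp
qed (use B in auto)

lemma dm_one: assumes "\<And>i. i < n \<Longrightarrow> f i * g i = 1" shows "dm n f * dm n g = 1\<^sub>m n"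
  unfolding dm_mult_left[OF dm_carrier] by (rule eq_matI) (auto simp: dm_def assms)

lemma switch_charpoly:
  assumes M: "is_mixed_graph n M" and p: "admissible n M p"
  shows "char_poly (herm_adj n (three_way_switch p M)) = char_poly (herm_adj n M)"
proof -
  have T: "i < n \<Longrightarrow> p i \<in> T6" for i using p unfolding admissible_def partition6_def by auto
  let ?P = "dm n (\<lambda>i. cnj (p i))" and ?Q = "dm n p"
  have PQ: "?P * ?Q = 1\<^sub>m n" by (rule dm_one) (use T T6_cnj_mult in auto)
  have QP: "?Q * ?P = 1\<^sub>m n" by (rule dm_one) (use T T6_cnj_mult in \<open>auto simp: mult.commute\<close>)
  have A: "herm_adj n M \<in> carrier_mat n n" unfolding herm_adj_def by simp
  have eq: "herm_adj n (three_way_switch p M) = ?P * herm_adj n M * ?Q"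
    unfolding dm_mult_left[OF A]
    by (subst dm_mult_right) (auto simp: herm_adj_def switch_ent[OF M p, unfolded ent_def] intro!: eq_matI)
  have "similar_mat_wit (herm_adj n (three_way_switch p M)) (herm_adj n M) ?P ?Q"
    unfolding similar_mat_wit_def Let_def using PQ QP eq A by (auto simp: herm_adj_def)
  then have "similar_mat (herm_adj n (three_way_switch p M)) (herm_adj n M)"
    unfolding similar_mat_def by blast
  then show ?thesis by (rule char_poly_similar)
qed

lemma converse_valid: "is_mixed_graph n M \<Longrightarrow> is_mixed_graph n (converse_mixed M)"
  unfolding is_mixed_graph_def converse_mixed_def simple_graph_def by auto

lemma converse_charpoly:
  assumes M: "is_mixed_graph n M"
  shows "char_poly (herm_adj n (converse_mixed M)) = char_poly (herm_adj n M)"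
proof -
  have "herm_adj n (converse_mixed M) = transpose_mat (herm_adj n M)"
  proof (rule eq_matI)
    fix i j assume "i < dim_row (transpose_mat (herm_adj n M))" "j < dim_col (transpose_mat (herm_adj n M))"
    then have i: "i < n" and j: "j < n" by (auto simp: herm_adj_def)
    have f: "fst M i j = fst M j i" using M unfolding is_mixed_graph_def simple_graph_def by blast
    show "herm_adj n (converse_mixed M) $$ (i, j) = transpose_mat (herm_adj n M) $$ (i, j)"
      using i j f by (simp add: herm_adj_def converse_mixed_def)
  qed (auto simp: herm_adj_def)
  moreover have "herm_adj n M \<in> carrier_mat n n" by (simp add: herm_adj_def)
  ultimately show ?thesis using char_poly_transpose_mat by metis
qed

lemma chain_charpoly:
  assumes "(switch_step n)\<^sup>*\<^sup>* M1 M2" "is_mixed_graph n M1"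
  shows "is_mixed_graph n M2 \<and> char_poly (herm_adj n M2) = char_poly (herm_adj n M1)"
  using assms
proof (induction rule: rtranclp_induct)
  case base
  then show ?case by simp
next
  case (step y z)
  then have y: "is_mixed_graph n y" and cy: "char_poly (herm_adj n y) = char_poly (herm_adj n M1)" by auto
  from step(2) show ?case unfolding switch_step_def
  proof (elim disjE exE conjE)
    fix p assume p: "admissible n y p" and z: "z = three_way_switch p y"
    show ?thesis unfolding z using switch_valid[OF y p] switch_charpoly[OF y p] cy by simp
  next
    assume z: "z = converse_mixed y"
    show ?thesis unfolding z using converse_valid[OF y] converse_charpoly[OF y] cy by simp
  qed
qed

lemma undirected_valid: "simple_graph n G \<Longrightarrow> is_mixed_graph n (undirected G)"
  unfolding is_mixed_graph_def undirected_def by simp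

lemma d_imp_a:
  assumes G: "simple_graph n G" and M: "is_mixed_graph n M"
    and sw: "switching_equivalent n (undirected G) M"
  shows "cospectral n (undirected G) M"
proof -
  have "char_poly (herm_adj n M) = char_poly (herm_adj n (undirected G))"
    using sw unfolding switching_equivalent_def
    using chain_charpoly[of n "undirected G" M] chain_charpoly[of n M "undirected G"] undirected_valid[OF G] M
    by metis
  then show ?thesis unfolding cospectral_def eigenvalues_def by simp
qed

lemma c_imp_d:
  assumes G: "simple_graph n G" and M: "is_mixed_graph n M" and U: "underlying M = G"
    and p: "partition6 n p" and pf: "\<forall>u v. fst M u v \<longrightarrow> p u = p v"
    and ps: "\<forall>u v. snd M u v \<longrightarrow> p v = cnj omega * p u"
  shows "switching_equivalent n (undirected G) M"
proof -
  define q where "q = (\<lambda>i. cnj (p i))"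
  have T: "i < n \<Longrightarrow> p i \<in> T6" for i using p unfolding partition6_def by auto
  have Gb: "G x y \<Longrightarrow> x < n \<and> y < n" for x y using G unfolding simple_graph_def by blast
  have und: "G x y \<longleftrightarrow> fst M x y \<or> snd M x y \<or> snd M y x" for x y
  proof -
    have "underlying M x y = G x y" using U by simp
    then show ?thesis unfolding underlying_def by simp
  qed
  have c1: "cnj omega \<noteq> 1" and c2: "cnj omega * cnj omega \<noteq> 1"
    by (simp_all add: complex_eq_iff cnj_om s3)
  have adm: "admissible n (undirected G) q"
    unfolding admissible_def
  proof (intro conjI allI impI)
    show "partition6 n q" using p T6_cnj unfolding partition6_def q_def by blast
  next
    fix x y assume "fst (undirected G) x y"
    then have "G x y" by (simp add: undirected_def)
    then have "fst M x y \<or> snd M x y \<or> snd M y x" using und by blast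
    then show "q y = q x \<or> q y = omega * q x \<or> q x = omega * q y"
    proof (elim disjE)
      assume "fst M x y" then have "p x = p y" using pf by blast
      then show ?thesis unfolding q_def by simp
    next
      assume "snd M x y" then have "p y = cnj omega * p x" using ps by blast
      then show ?thesis unfolding q_def by simp
    next
      assume "snd M y x" then have "p x = cnj omega * p y" using ps by blast
      then show ?thesis unfolding q_def by simp
    qed
  next
    fix x y assume "snd (undirected G) x y"
    then show "q y = q x \<or> q y = cnj omega * q x \<or> q y = - omega * q x" by (simp add: undirected_def)
  qed
  have eq: "three_way_switch q (undirected G) = M"
  proof (rule prod_eqI; rule ext; rule ext)
    fix x y
    show "fst (three_way_switch q (undirected G)) x y = fst M x y"
    proof
      assume "fst (three_way_switch q (undirected G)) x y"
      then have g: "G x y" and qq: "q x = q y" unfolding three_way_switch_def undirected_def by auto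
      then have pp: "p x = p y" unfolding q_def by simp
      have nz: "p x \<noteq> 0" using T6_nz T Gb[OF g] by blast
      have "\<not> snd M x y"
      proof
        assume "snd M x y" then have "p y = cnj omega * p x" using ps by blast
        then have "1 * p x = cnj omega * p x" using pp by simp
        then show False using nz c1 by (metis mult_cancel_right)
      qed
      moreover have "\<not> snd M y x"
      proof
        assume "snd M y x" then have "p x = cnj omega * p y" using ps by blast
        then have "1 * p x = cnj omega * p x" using pp by simp
        then show False using nz c1 by (metis mult_cancel_right)
      qed
      ultimately show "fst M x y" using und g by blast
    next
      assume f: "fst M x y"
      then have "G x y" using und by blast
      moreover have "q x = q y" using pf f unfolding q_def by simp
      ultimately show "fst (three_way_switch q (undirected G)) x y"
        unfolding three_way_switch_def undirected_def by simp
    qed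
  next
    fix x y
    show "snd (three_way_switch q (undirected G)) x y = snd M x y"
    proof
      assume "snd (three_way_switch q (undirected G)) x y"
      then have g: "G x y" and qq: "q y = omega * q x" unfolding three_way_switch_def undirected_def by auto
      then have "cnj (p y) = cnj (cnj omega * p x)" unfolding q_def by simp
      then have pp: "p y = cnj omega * p x" by (metis complex_cnj_cnj)
      have nz: "p x \<noteq> 0" using T6_nz T Gb[OF g] by blast
      have "\<not> fst M x y"
      proof
        assume "fst M x y" then have "p x = p y" using pf by blast
        then have "1 * p x = cnj omega * p x" using pp by simp
        then show False using nz c1 by (metis mult_cancel_right)
      qed
      moreover have "\<not> snd M y x"
      proof
        assume "snd M y x" then have "p x = cnj omega * p y" using ps by blast
        then have "1 * p x = (cnj omega * cnj omega) * p x" using pp by (simp add: mult.assoc)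
        then show False using nz c2 by (metis mult_cancel_right)
      qed
      ultimately show "snd M x y" using und g by blast
    next
      assume s: "snd M x y"
      then have "G x y" using und by blast
      moreover have "p y = cnj omega * p x" using ps s by blast
      then have "q y = omega * q x" unfolding q_def by simp
      ultimately show "snd (three_way_switch q (undirected G)) x y"
        unfolding three_way_switch_def undirected_def by simp
    qed
  qed
  have "switch_step n (undirected G) M" unfolding switch_step_def using adm eq by blast
  then show ?thesis unfolding switching_equivalent_def by blast
qed



lemma lambda1_props:
  assumes M: "is_mixed_graph n M" and n: "0 < n"
  shows "eigenvalue (herm_adj n M) (of_real (lambda1 n M))"
    and "\<And>x. eigenvalue (herm_adj n M) (of_real x) \<Longrightarrow> x \<le> lambda1 n M"
proof -
  let ?A = "herm_adj n M"
  let ?R = "{x. eigenvalue ?A (complex_of_real x)}"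
  have fs: "finite (spectrum ?A)" using card_finite_spectrum(1)[OF herm_adj_carrier] .
  have "?R \<subseteq> Re ` spectrum ?A"
  proof
    fix x assume "x \<in> ?R"
    then have "complex_of_real x \<in> spectrum ?A" unfolding spectrum_def by simp
    then show "x \<in> Re ` spectrum ?A" by (metis Re_complex_of_real image_eqI)
  qed
  then have fin: "finite ?R" using fs finite_surj by blast
  obtain mu where "mu \<in> spectrum ?A" using spectrum_non_empty[OF herm_adj_carrier n] by blast
  then have ev: "eigenvalue ?A mu" unfolding spectrum_def by simp
  moreover have "mu = of_real (Re mu)" using eigen_real[OF M ev] .
  ultimately have "Re mu \<in> ?R" by simp
  then have ne: "?R \<noteq> {}" by blast
  have l: "lambda1 n M = Max ?R" unfolding lambda1_def ..
  show "eigenvalue (herm_adj n M) (of_real (lambda1 n M))"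
    using Max_in[OF fin ne] unfolding l by simp
  show "\<And>x. eigenvalue (herm_adj n M) (of_real x) \<Longrightarrow> x \<le> lambda1 n M"
    unfolding l using Max_ge[OF fin] by simp
qed

lemma eigen_iff_mset: "eigenvalue (herm_adj n M) k \<longleftrightarrow> k \<in># eigenvalues n M"
proof -
  have c: "char_poly (herm_adj n M) \<noteq> 0"
    using degree_monic_char_poly[OF herm_adj_carrier[of n M]] by auto
  show ?thesis unfolding eigenvalues_def eigenvalue_root_char_poly[OF herm_adj_carrier]
    using c by simp
qed

lemma a_imp_b: "cospectral n M1 M2 \<Longrightarrow> lambda1 n M1 = lambda1 n M2"
  unfolding cospectral_def lambda1_def eigen_iff_mset by simp


lemma pos_conn:
  fixes y :: "nat \<Rightarrow> real"
  assumes G: "simple_graph n G" and C: "connected_graph n G"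
    and nn: "\<And>i. y i \<ge> 0"
    and ev: "\<And>i. i < n \<Longrightarrow> (\<Sum>j<n. (if G i j then 1 else 0) * y j) = m * y i"
    and nz: "\<exists>i<n. y i \<noteq> 0"
    and i: "i < n"
  shows "y i > 0"
proof (rule ccontr)
  assume "\<not> y i > 0"
  then have yi: "y i = 0" using nn[of i] by linarith
  have "G\<^sup>*\<^sup>* i w \<Longrightarrow> y w = 0" for w
  proof (induction rule: rtranclp_induct)
    case base
    then show ?case using yi .
  next
    case (step b c)
    have bc: "b < n" "c < n" using step(2) G unfolding simple_graph_def by blast+
    have "(\<Sum>j<n. (if G b j then 1 else 0) * y j) = 0" using ev[OF bc(1)] step(3) by simp
    moreover have "\<forall>j\<in>{..<n}. (if G b j then 1 else 0) * y j \<ge> 0" using nn by simp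
    ultimately have "\<forall>j\<in>{..<n}. (if G b j then 1 else 0) * y j = 0"
      using sum_nonneg_eq_0_iff[of "{..<n}" "\<lambda>j. (if G b j then 1 else 0) * y j"] by simp
    then have "(if G b c then 1 else 0) * y c = 0" using bc(2) by blast
    then show ?case using step(2) by simp
  qed
  moreover have "\<And>w. w < n \<Longrightarrow> G\<^sup>*\<^sup>* i w" using C i unfolding connected_graph_def by blast
  ultimately have "\<And>w. w < n \<Longrightarrow> y w = 0" by blast
  then show False using nz by blast
qed

lemma T6_conn:
  assumes C: "connected_graph n G" and G: "simple_graph n G"
    and p0: "p 0 = 1" and st: "\<And>b c. G b c \<Longrightarrow> \<exists>e\<in>T6. p c = e * p b"
    and w: "w < n"
  shows "p w \<in> T6"
proof -
  have "0 < n" using C unfolding connected_graph_def by blast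
  then have "G\<^sup>*\<^sup>* 0 w" using C w unfolding connected_graph_def by blast
  then show ?thesis
  proof (induction rule: rtranclp_induct)
    case base
    then show ?case using p0 by (simp add: T6_def)
  next
    case (step b c)
    then obtain e where "e \<in> T6" "p c = e * p b" using st by blast
    then show ?case using step(3) T6_mult by simp
  qed
qed

lemma re_eq_norm: "Re z = cmod z \<Longrightarrow> z = complex_of_real (cmod z)"
proof -
  assume a: "Re z = cmod z"
  have "(cmod z)^2 = (Re z)^2 + (Im z)^2" by (simp add: cmod_power2)
  then have "Im z = 0" using a by simp
  then show ?thesis using a by (simp add: complex_eq_iff)
qed

lemma ent_facts:
  assumes M: "is_mixed_graph n M"
  shows "ent M i j \<noteq> 0 \<longleftrightarrow> underlying M i j"
    and "ent M i j \<noteq> 0 \<Longrightarrow> ent M i j \<in> T6"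
    and "fst M i j \<Longrightarrow> ent M i j = 1"
    and "snd M i j \<Longrightarrow> ent M i j = omega"
proof -
  have f: "fst M i j \<Longrightarrow> \<not> snd M i j \<and> \<not> snd M j i" using M unfolding is_mixed_graph_def simple_graph_def by blast
  have om: "omega \<noteq> 0" "cnj omega \<noteq> 0" by (simp_all add: complex_eq_iff om_def)
  show "ent M i j \<noteq> 0 \<longleftrightarrow> underlying M i j" unfolding ent_def underlying_def using om by auto
  show "ent M i j \<noteq> 0 \<Longrightarrow> ent M i j \<in> T6" unfolding ent_def by (auto simp: T6_def)
  show "fst M i j \<Longrightarrow> ent M i j = 1" unfolding ent_def using f by auto
  show "snd M i j \<Longrightarrow> ent M i j = omega" unfolding ent_def by auto
qed


lemma b_imp_c:
  assumes G: "simple_graph n G" and C: "connected_graph n G" and M: "is_mixed_graph n M"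
    and S: "spanning_subgraph (underlying M) G" and L: "lambda1 n (undirected G) = lambda1 n M"
  shows "underlying M = G \<and> (\<exists>p. partition6 n p \<and> (\<forall>u v. fst M u v \<longrightarrow> p u = p v)
            \<and> (\<forall>u v. snd M u v \<longrightarrow> p v = cnj omega * p u))"
proof -
  have n: "0 < n" using C unfolding connected_graph_def by blast
  define a where "a = (\<lambda>i j. if G i j then 1 else (0::real))"
  have sym: "\<And>i j. a i j = a j i" using G unfolding a_def simple_graph_def by auto
  obtain m v where v: "\<exists>i<n. v i \<noteq> 0" "\<forall>i<n. (\<Sum>j<n. a i j * v j) = m * v i"
    and ray: "\<forall>y. qf n a y \<le> m * nsq n y"
    using rayleigh_max[of n a, OF n sym] by blast
  have entG: "ent (undirected G) i j = of_real (a i j)" for i j unfolding ent_def undirected_def a_def by simp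
  have "eigenvalue (herm_adj n (undirected G)) (of_real m)"
    unfolding eigen_bridge
  proof (intro exI[of _ "\<lambda>i. complex_of_real (v i)"] conjI allI impI)
    show "\<exists>i<n. complex_of_real (v i) \<noteq> 0" using v(1) by simp
    fix i assume i: "i < n"
    have "(\<Sum>j<n. ent (undirected G) i j * complex_of_real (v j)) = of_real (\<Sum>j<n. a i j * v j)"
      unfolding entG by simp
    also have "\<dots> = of_real m * of_real (v i)" using v(2) i by simp
    finally show "(\<Sum>j<n. ent (undirected G) i j * complex_of_real (v j)) = of_real m * of_real (v i)" .
  qed
  then have mle: "m \<le> lambda1 n (undirected G)" using lambda1_props(2)[OF undirected_valid[OF G] n] by blast
  define lam where "lam = lambda1 n M"
  obtain x where x: "\<exists>i<n. x i \<noteq> 0" "\<And>i. i<n \<Longrightarrow> (\<Sum>j<n. ent M i j * x j) = of_real lam * x i"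
    using lambda1_props(1)[OF M n] unfolding eigen_bridge lam_def by blast
  define y where "y = (\<lambda>i. cmod (x i))"
  define z where "z = (\<lambda>i j. cnj (x i) * ent M i j * x j)"
  have nn: "\<And>i. y i \<ge> 0" unfolding y_def by simp
  have ypos: "nsq n y > 0"
  proof -
    obtain i where "i < n" "x i \<noteq> 0" using x(1) by blast
    then show ?thesis unfolding nsq_def y_def by (intro sum_pos2[of _ i]) auto
  qed
  have hsum: "(\<Sum>i<n. \<Sum>j<n. z i j) = of_real (lam * nsq n y)"
  proof -
    have "(\<Sum>i<n. \<Sum>j<n. z i j) = (\<Sum>i<n. cnj (x i) * (\<Sum>j<n. ent M i j * x j))"
      unfolding z_def by (simp add: sum_distrib_left mult.assoc)
    also have "\<dots> = (\<Sum>i<n. of_real lam * (cnj (x i) * x i))"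
      using x(2) by (intro sum.cong refl) (simp add: ac_simps)
    also have "\<dots> = (\<Sum>i<n. of_real lam * of_real ((y i)^2))"
      unfolding y_def by (intro sum.cong refl) (metis complex_norm_square mult.commute)
    also have "\<dots> = of_real (lam * nsq n y)" unfolding nsq_def by (simp add: sum_distrib_left)
    finally show ?thesis .
  qed
  have ReH: "(\<Sum>i<n. \<Sum>j<n. Re (z i j)) = lam * nsq n y"
  proof -
    have "(\<Sum>i<n. \<Sum>j<n. Re (z i j)) = Re (\<Sum>i<n. \<Sum>j<n. z i j)" by (simp add: Re_sum)
    then show ?thesis using hsum by simp
  qed
  have tm: "Re (z i j) \<le> a i j * y i * y j" for i j
  proof -
    have "Re (z i j) \<le> cmod (z i j)" by (rule complex_Re_le_cmod)
    also have "cmod (z i j) = cmod (ent M i j) * y i * y j" unfolding z_def y_def by (simp add: norm_mult)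
    also have "\<dots> \<le> a i j * y i * y j"
    proof (cases "ent M i j = 0")
      case True then show ?thesis using nn by (simp add: a_def)
    next
      case False
      then have "underlying M i j" using ent_facts(1)[OF M] by blast
      then have "G i j" using S unfolding spanning_subgraph_def by blast
      moreover have "cmod (ent M i j) = 1" using T6_norm ent_facts(2)[OF M False] by blast
      ultimately show ?thesis by (simp add: a_def)
    qed
    finally show ?thesis .
  qed
  have qfy: "(\<Sum>i<n. \<Sum>j<n. Re (z i j)) \<le> qf n a y" unfolding qf_def using tm by (intro sum_mono) auto
  have A1: "lam * nsq n y \<le> qf n a y" using ReH qfy by simp
  have A2: "qf n a y \<le> m * nsq n y" using ray by blast
  have A3: "m * nsq n y \<le> lam * nsq n y" using mle L lam_def ypos by (simp add: mult_right_mono less_imp_le)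
  have eqs: "qf n a y = m * nsq n y" using A1 A2 A3 by linarith
  have eqR: "(\<Sum>i<n. \<Sum>j<n. Re (z i j)) = qf n a y" using A1 A2 A3 ReH by linarith
  have evy: "\<And>i. i < n \<Longrightarrow> (\<Sum>j<n. a i j * y j) = m * y i"
    using psd_eq[of a n m y, OF sym] ray eqs by blast
  have nzy: "\<exists>i<n. y i \<noteq> 0" using x(1) unfolding y_def by auto
  have yp: "\<And>i. i < n \<Longrightarrow> y i > 0"
  proof -
    fix i assume i: "i < n"
    have ev': "\<And>k. k < n \<Longrightarrow> (\<Sum>j<n. (if G k j then 1 else 0) * y j) = m * y k"
      using evy unfolding a_def by simp
    show "y i > 0" by (rule pos_conn[OF G C nn ev' nzy i])
  qed
  have D0: "Re (z i j) = a i j * y i * y j" if i: "i < n" and j: "j < n" for i j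
  proof -
    define D where "D = (\<lambda>i j. a i j * y i * y j - Re (z i j))"
    have Dn: "\<And>i j. D i j \<ge> 0" unfolding D_def using tm by simp
    have "(\<Sum>i<n. \<Sum>j<n. D i j) = 0"
      using eqR unfolding qf_def D_def by (simp add: sum_subtractf)
    moreover have "\<forall>i\<in>{..<n}. (\<Sum>j<n. D i j) \<ge> 0" using Dn by (simp add: sum_nonneg)
    ultimately have "\<forall>i\<in>{..<n}. (\<Sum>j<n. D i j) = 0"
      using sum_nonneg_eq_0_iff[of "{..<n}" "\<lambda>i. (\<Sum>j<n. D i j)"] by simp
    then have "(\<Sum>j<n. D i j) = 0" using i by blast
    then have "\<forall>j\<in>{..<n}. D i j = 0"
      using sum_nonneg_eq_0_iff[of "{..<n}" "\<lambda>j. D i j"] Dn by simp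
    then show ?thesis using j unfolding D_def by auto
  qed
  have edge: "underlying M i j \<and> z i j = of_real (y i * y j)" if g: "G i j" for i j
  proof -
    have ij: "i < n" "j < n" using g G unfolding simple_graph_def by blast+
    have re: "Re (z i j) = y i * y j" using D0[OF ij] g by (simp add: a_def)
    have pos: "y i * y j > 0" using yp ij by simp
    have "ent M i j \<noteq> 0"
    proof
      assume "ent M i j = 0"
      then have "z i j = 0" unfolding z_def by simp
      then show False using re pos by (metis less_irrefl zero_complex.sel(1))
    qed
    then have u: "underlying M i j" and c1: "cmod (ent M i j) = 1"
      using ent_facts(1,2)[OF M] T6_norm by blast+
    have cz: "cmod (z i j) = y i * y j" unfolding z_def y_def using c1 by (simp add: norm_mult)
    then have "Re (z i j) = cmod (z i j)" using re by simp
    from re_eq_norm[OF this] have "z i j = of_real (y i * y j)" using cz by simp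
    then show ?thesis using u by simp
  qed
  define ph where "ph = (\<lambda>i. x i / of_real (y i))"
  have phn: "cnj (ph i) * ph i = 1" if i: "i < n" for i
  proof -
    have "cmod (ph i) = 1" unfolding ph_def using yp[OF i] by (simp add: norm_divide y_def)
    then show ?thesis by (metis complex_norm_square mult.commute of_real_1 power_one)
  qed
  have rel: "ph j = cnj (ent M i j) * ph i" if g: "G i j" for i j
  proof -
    have ij: "i < n" "j < n" using g G unfolding simple_graph_def by blast+
    have yi: "complex_of_real (y i) \<noteq> 0" "complex_of_real (y j) \<noteq> 0" using yp ij by (auto simp: less_le)
    have "cnj (ph i) * ent M i j * ph j = z i j / of_real (y i * y j)"
      unfolding ph_def z_def using yi by (simp add: field_simps)
    also have "\<dots> = 1" using edge[OF g] yi by simp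
    finally have e1: "cnj (ph i) * ent M i j * ph j = 1" .
    have e2: "ent M i j * ph j = ph i"
    proof -
      have "ent M i j * ph j = (ph i * cnj (ph i)) * (ent M i j * ph j)" using phn[OF ij(1)] by (simp add: mult.commute)
      also have "\<dots> = ph i * (cnj (ph i) * ent M i j * ph j)" by (simp add: ac_simps)
      also have "\<dots> = ph i" using e1 by simp
      finally show ?thesis .
    qed
    have "ent M i j \<in> T6" using ent_facts(1,2)[OF M] edge[OF g] by blast
    then have e3: "cnj (ent M i j) * ent M i j = 1" using T6_cnj_mult by blast
    have "ph j = (cnj (ent M i j) * ent M i j) * ph j" using e3 by simp
    also have "\<dots> = cnj (ent M i j) * ph i" using e2 by (simp add: mult.assoc)
    finally show ?thesis .
  qed
  define p where "p = (\<lambda>i. ph i * cnj (ph 0))"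
  have prel: "p j = cnj (ent M i j) * p i" if "G i j" for i j unfolding p_def using rel[OF that] by simp
  have p0: "p 0 = 1" unfolding p_def using phn[OF n] by (simp add: mult.commute)
  have part: "partition6 n p" unfolding partition6_def
  proof (intro allI impI)
    fix w assume w: "w < n"
    show "p w \<in> T6"
    proof (rule T6_conn[of n G p w, OF C G p0 _ w])
      fix b c assume g: "G b c"
      have "ent M b c \<in> T6" using ent_facts(1,2)[OF M] edge[OF g] by blast
      then show "\<exists>e\<in>T6. p c = e * p b" using prel[OF g] T6_cnj by blast
    qed
  qed
  have U: "underlying M = G"
  proof (intro ext iffI)
    fix u v assume "underlying M u v" then show "G u v" using S unfolding spanning_subgraph_def by blast
  next
    fix u v assume "G u v" then show "underlying M u v" using edge by blast
  qed
  have pf: "\<forall>u v. fst M u v \<longrightarrow> p u = p v"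
  proof (intro allI impI)
    fix u v assume f: "fst M u v"
    then have "underlying M u v" unfolding underlying_def by simp
    then have "G u v" using U by simp
    then show "p u = p v" using prel ent_facts(3)[OF M f] by simp
  qed
  have ps: "\<forall>u v. snd M u v \<longrightarrow> p v = cnj omega * p u"
  proof (intro allI impI)
    fix u v assume s: "snd M u v"
    then have "underlying M u v" unfolding underlying_def by simp
    then have "G u v" using U by simp
    then show "p v = cnj omega * p u" using prel ent_facts(4)[OF M s] by simp
  qed
  show ?thesis using U part pf ps by blast
qed

theorem theorem4p3:
  fixes n :: nat and G :: rel and M :: mixed_graph
  assumes "simple_graph n G" and "connected_graph n G"
    and "is_mixed_graph n M"
    and "spanning_subgraph (underlying M) G"
  shows "(cospectral n (undirected G) M \<longleftrightarrow> lambda1 n (undirected G) = lambda1 n M)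
       \<and> (lambda1 n (undirected G) = lambda1 n M \<longleftrightarrow>
           (underlying M = G \<and>
            (\<exists>p. partition6 n p \<and>
                 (\<forall>u v. fst M u v \<longrightarrow> p u = p v) \<and>
                 (\<forall>u v. snd M u v \<longrightarrow> p v = cnj omega * p u))))
       \<and> ((underlying M = G \<and>
            (\<exists>p. partition6 n p \<and>
                 (\<forall>u v. fst M u v \<longrightarrow> p u = p v) \<and>
                 (\<forall>u v. snd M u v \<longrightarrow> p v = cnj omega * p u)))
           \<longleftrightarrow> switching_equivalent n (undirected G) M)"
proof -
  note G = assms(1) and C = assms(2) and M = assms(3) and S = assms(4)
  let ?c = "underlying M = G \<and>
            (\<exists>p. partition6 n p \<and>
                 (\<forall>u v. fst M u v \<longrightarrow> p u = p v) \<and>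
                 (\<forall>u v. snd M u v \<longrightarrow> p v = cnj omega * p u))"
  have cd: "?c \<Longrightarrow> switching_equivalent n (undirected G) M"
    using c_imp_d[OF G M] by blast
  have da: "switching_equivalent n (undirected G) M \<Longrightarrow> cospectral n (undirected G) M"
    using d_imp_a[OF G M] by blast
  have ab: "cospectral n (undirected G) M \<Longrightarrow> lambda1 n (undirected G) = lambda1 n M"
    using a_imp_b by blast
  have bc: "lambda1 n (undirected G) = lambda1 n M \<Longrightarrow> ?c"
    using b_imp_c[OF G C M S] by blast
  show ?thesis using ab bc cd da by blast
qed

end
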